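(* Let $N>0$. (i) If $\tau\in(\tau_0^{(1)},\tau_1^{(1)})$, then $\beta_1^{**}(\tau)=\varphi_2^+(\beta_2^*(\tau))$, equivalently $\beta_2^*(\tau)=\varphi_1^+(\beta_1^{**}(\tau))$. In particular $$4(N+1)<\underline\beta_1(\tau)<\beta_1^{**}(\tau)<\overline\beta_1(\tau)\quad\text{and}\quad \underline\beta_2(\tau)<\beta_2^*(\tau)<\overline\beta_2(\tau).$$ (ii) If $\tau\in(\tau_0^{(2)},\tau_1^{(2)})$, then $\beta_2^{**}(\tau)=\varphi_1^+(\beta_1^*(\tau))$, equivalently $\beta_1^*(\tau)=\varphi_2^+(\beta_2^{**}(\tau))$. In particular $$4<\underline\beta_2(\tau)<\beta_2^{**}(\tau)<\overline\beta_2(\tau)\quad\text{and}\quad \underline\beta_1(\tau)<\beta_1^*(\tau)<\overline\beta_1(\tau).$$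
   Context: For $\tau\in(0,1)$, with $D=(N+1)^2+2\tau(N+1)+1$: $$\underline\beta_1(\tau)=\tfrac{2}{1-\tau^2}(N+1+\tau+\tau\sqrt D),\qquad \overline\beta_1(\tau)=\tfrac{2}{1-\tau^2}(N+1+\tau+\sqrt D),$$ $$\underline\beta_2(\tau)=\tfrac{2}{1-\tau^2}(1+\tau(N+1)+\tau\sqrt D),\qquad \overline\beta_2(\tau)=\tfrac{2}{1-\tau^2}(1+\tau(N+1)+\sqrt D);$$ $$\beta_1^*(\tau)=4(N+1)+8\tau,\quad \beta_2^*(\tau)=4+8\tau(N+1),\quad \beta_1^{**}(\tau)=8\tau(1+2\tau(N+1)),\quad \beta_2^{**}(\tau)=8\tau(N+1+2\tau);$$ $$\tau_0^{(1)}=\frac{N+1}{1+\sqrt{1+4(N+1)^2}},\qquad \tau_0^{(2)}=\frac{1}{N+1+\sqrt{(N+1)^2+4}};$$ $\tau_1^{(1)}$ is the unique positive zero of $2(1-2\tau^2)(1+2\tau(N+1))-1$ and $\tau_1^{(2)}$ the unique positive zero of $2(1-2\tau^2)(N+1+2\tau)-(N+1)$; $$\varphi_1^+(\beta_1)=2+\tau\beta_1+\sqrt{(2+\tau\beta_1)^2-\beta_1(\beta_1-4(N+1))}\ \ (0<\beta_1\le\overline\beta_1(\tau)),$$ $$\varphi_2^+(\beta_2)=2(N+1)+\tau\beta_2+\sqrt{(2(N+1)+\tau\beta_2)^2-\beta_2(\beta_2-4)}\ \ (0<\beta_2\le\overline\beta_2(\tau)).$$ *)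

theory Defs
  imports Complex_Main
begin

definition DD :: "real \<Rightarrow> real \<Rightarrow> real" where
  "DD N \<tau> = (N+1)^2 + 2*\<tau>*(N+1) + 1"

definition beta1_low :: "real \<Rightarrow> real \<Rightarrow> real" where
  "beta1_low N \<tau> = 2/(1-\<tau>^2) * (N+1+\<tau>+\<tau>*sqrt (DD N \<tau>))"
definition beta1_up :: "real \<Rightarrow> real \<Rightarrow> real" where
  "beta1_up N \<tau> = 2/(1-\<tau>^2) * (N+1+\<tau>+sqrt (DD N \<tau>))"
definition beta2_low :: "real \<Rightarrow> real \<Rightarrow> real" where
  "beta2_low N \<tau> = 2/(1-\<tau>^2) * (1+\<tau>*(N+1)+\<tau>*sqrt (DD N \<tau>))"
definition beta2_up :: "real \<Rightarrow> real \<Rightarrow> real" where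
  "beta2_up N \<tau> = 2/(1-\<tau>^2) * (1+\<tau>*(N+1)+sqrt (DD N \<tau>))"

definition beta1_star :: "real \<Rightarrow> real \<Rightarrow> real" where
  "beta1_star N \<tau> = 4*(N+1) + 8*\<tau>"
definition beta2_star :: "real \<Rightarrow> real \<Rightarrow> real" where
  "beta2_star N \<tau> = 4 + 8*\<tau>*(N+1)"
definition beta1_sstar :: "real \<Rightarrow> real \<Rightarrow> real" where
  "beta1_sstar N \<tau> = 8*\<tau>*(1+2*\<tau>*(N+1))"
definition beta2_sstar :: "real \<Rightarrow> real \<Rightarrow> real" where
  "beta2_sstar N \<tau> = 8*\<tau>*(N+1+2*\<tau>)"

definition tau0_1 :: "real \<Rightarrow> real" where
  "tau0_1 N = (N+1) / (1 + sqrt (1 + 4*(N+1)^2))"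
definition tau0_2 :: "real \<Rightarrow> real" where
  "tau0_2 N = 1 / (N+1 + sqrt ((N+1)^2 + 4))"

(* unique positive zeros *)
definition tau1_1 :: "real \<Rightarrow> real" where
  "tau1_1 N = (THE \<tau>. \<tau> > 0 \<and> 2*(1-2*\<tau>^2)*(1+2*\<tau>*(N+1)) - 1 = 0)"
definition tau1_2 :: "real \<Rightarrow> real" where
  "tau1_2 N = (THE \<tau>. \<tau> > 0 \<and> 2*(1-2*\<tau>^2)*(N+1+2*\<tau>) - (N+1) = 0)"

(* phi_i^+, meaningful for 0 < beta_i <= beta_i_up N tau (domain stated separately) *)
definition phi1_plus :: "real \<Rightarrow> real \<Rightarrow> real \<Rightarrow> real" where
  "phi1_plus N \<tau> b = 2 + \<tau>*b + sqrt ((2+\<tau>*b)^2 - b*(b - 4*(N+1)))"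
definition phi2_plus :: "real \<Rightarrow> real \<Rightarrow> real \<Rightarrow> real" where
  "phi2_plus N \<tau> b = 2*(N+1) + \<tau>*b + sqrt ((2*(N+1)+\<tau>*b)^2 - b*(b - 4))"

end

theory Submission
  imports Defs
begin


definition gg1 :: "real \<Rightarrow> real \<Rightarrow> real" where
  "gg1 m t = 2*(1-2*t^2)*(1+2*t*(m+1)) - 1"
definition gg2 :: "real \<Rightarrow> real \<Rightarrow> real" where
  "gg2 m t = 2*(1-2*t^2)*(m+1+2*t) - (m+1)"

lemma gg1_diff: "gg1 m x - gg1 m t = (t-x)*(4*(x+t)+8*(m+1)*(x^2+x*t+t^2)-4*(m+1))"
  unfolding gg1_def by (simp add: algebra_simps power2_eq_square power3_eq_cube)
lemma gg2_diff: "gg2 m x - gg2 m t = (t-x)*(4*(m+1)*(x+t)+8*(x^2+x*t+t^2)-4)"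
  unfolding gg2_def by (simp add: algebra_simps power2_eq_square power3_eq_cube)

lemma gg1_pos_before:
  assumes m: "m \<ge> 0" and t: "t > 0" "gg1 m t = 0" and x: "0 < x" "x < t"
  shows "gg1 m x > 0"
proof -
  have "gg1 m 0 - gg1 m t = t*(4*t+8*(m+1)*t^2-4*(m+1))"
    using gg1_diff[of m 0 t] by simp
  hence "t*(4*t+8*(m+1)*t^2-4*(m+1)) = 1" using t by (simp add: gg1_def)
  hence B0: "4*t+8*(m+1)*t^2-4*(m+1) > 0" using t
    by (metis zero_less_mult_pos zero_less_one)
  have "4*(x+t)+8*(m+1)*(x^2+x*t+t^2)-4*(m+1) \<ge> 4*t+8*(m+1)*t^2-4*(m+1)"
    using m x t by (simp add: algebra_simps)
  hence "4*(x+t)+8*(m+1)*(x^2+x*t+t^2)-4*(m+1) > 0" using B0 by linarith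
  moreover have "gg1 m x = (t-x)*(4*(x+t)+8*(m+1)*(x^2+x*t+t^2)-4*(m+1))"
    using gg1_diff[of m x t] t by simp
  ultimately show ?thesis using x by simp
qed

lemma gg2_pos_before:
  assumes m: "m \<ge> 0" and t: "t > 0" "gg2 m t = 0" and x: "0 < x" "x < t"
  shows "gg2 m x > 0"
proof -
  have "gg2 m 0 - gg2 m t = t*(4*(m+1)*t+8*t^2-4)"
    using gg2_diff[of m 0 t] by simp
  hence "t*(4*(m+1)*t+8*t^2-4) = m+1" using t by (simp add: gg2_def)
  hence B0: "4*(m+1)*t+8*t^2-4 > 0" using t m
    using zero_less_mult_pos[of t "4*(m+1)*t+8*t^2-4"] by simp
  have "4*(m+1)*(x+t)+8*(x^2+x*t+t^2)-4 \<ge> 4*(m+1)*t+8*t^2-4"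
    using m x t by (simp add: algebra_simps)
  hence "4*(m+1)*(x+t)+8*(x^2+x*t+t^2)-4 > 0" using B0 by linarith
  moreover have "gg2 m x = (t-x)*(4*(m+1)*(x+t)+8*(x^2+x*t+t^2)-4)"
    using gg2_diff[of m x t] t by simp
  ultimately show ?thesis using x by simp
qed

lemma gg1_ex: assumes "m \<ge> 0" shows "\<exists>t. t > 0 \<and> gg1 m t = 0"
proof -
  have c: "continuous_on {0..1} (gg1 m)" unfolding gg1_def by (intro continuous_intros)
  have "gg1 m 1 \<le> 0" "0 \<le> gg1 m 0" using assms by (simp_all add: gg1_def)
  from IVT2'[OF this _ c] obtain x where "0 \<le> x" "x \<le> 1" "gg1 m x = 0" by auto
  moreover have "x \<noteq> 0" using \<open>gg1 m x = 0\<close> by (auto simp: gg1_def)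
  ultimately have "x > 0" by simp
  thus ?thesis using \<open>gg1 m x = 0\<close> by blast
qed

lemma gg2_ex: assumes "m \<ge> 0" shows "\<exists>t. t > 0 \<and> gg2 m t = 0"
proof -
  have c: "continuous_on {0..1} (gg2 m)" unfolding gg2_def by (intro continuous_intros)
  have "gg2 m 1 \<le> 0" "0 \<le> gg2 m 0" using assms by (simp_all add: gg2_def)
  from IVT2'[OF this _ c] obtain x where "0 \<le> x" "x \<le> 1" "gg2 m x = 0" by auto
  moreover have "x \<noteq> 0" using \<open>gg2 m x = 0\<close> assms by (auto simp: gg2_def)
  ultimately have "x > 0" by simp
  thus ?thesis using \<open>gg2 m x = 0\<close> by blast
qed

lemma tau1_1_char: assumes "m \<ge> 0" shows "tau1_1 m > 0 \<and> gg1 m (tau1_1 m) = 0"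
proof -
  obtain t where t: "t > 0" "gg1 m t = 0" using gg1_ex[OF assms] by auto
  have "\<exists>!t. t > 0 \<and> gg1 m t = 0"
  proof (rule ex1I[of _ t])
    show "t > 0 \<and> gg1 m t = 0" using t by simp
    fix y assume y: "y > 0 \<and> gg1 m y = 0"
    show "y = t"
    proof (rule ccontr)
      assume "y \<noteq> t"
      hence "y < t \<or> t < y" by linarith
      thus False using gg1_pos_before[OF assms t] gg1_pos_before[OF assms, of y t] y t by force
    qed
  qed
  hence "tau1_1 m > 0 \<and> gg1 m (tau1_1 m) = 0"
    unfolding tau1_1_def gg1_def[symmetric] by (rule theI')
  thus ?thesis .
qed

lemma tau1_2_char: assumes "m \<ge> 0" shows "tau1_2 m > 0 \<and> gg2 m (tau1_2 m) = 0"
proof -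
  obtain t where t: "t > 0" "gg2 m t = 0" using gg2_ex[OF assms] by auto
  have "\<exists>!t. t > 0 \<and> gg2 m t = 0"
  proof (rule ex1I[of _ t])
    show "t > 0 \<and> gg2 m t = 0" using t by simp
    fix y assume y: "y > 0 \<and> gg2 m y = 0"
    show "y = t"
    proof (rule ccontr)
      assume "y \<noteq> t"
      hence "y < t \<or> t < y" by linarith
      thus False using gg2_pos_before[OF assms t] gg2_pos_before[OF assms, of y t] y t by force
    qed
  qed
  hence "tau1_2 m > 0 \<and> gg2 m (tau1_2 m) = 0"
    unfolding tau1_2_def gg2_def[symmetric] by (rule theI')
  thus ?thesis .
qed

lemma lt_bs: fixes a b D :: real
  assumes "0 < b" "0 < D" "a \<le> 0 \<or> a^2 < b^2*D" shows "a < b*sqrt D"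
proof (cases "a \<le> 0")
  case True
  have "0 \<le> b * sqrt D" using assms by simp
  have "sqrt D > 0" using assms by simp
  hence "b * sqrt D > 0" using assms by (simp add: mult_pos_pos)
  thus ?thesis using \<open>a \<le> 0\<close> by simp
next
  case False
  hence "a^2 < (b*sqrt D)^2" using assms by (simp add: power_mult_distrib)
  thus ?thesis by (rule power2_less_imp_less) (use assms in simp)
qed

lemma lt_bs2: fixes a b D :: real
  assumes "0 < a" "0 \<le> b" "0 \<le> D" "b^2*D < a^2" shows "b*sqrt D < a"
proof -
  have "(b*sqrt D)^2 < a^2" using assms by (simp add: power_mult_distrib)
  thus ?thesis by (rule power2_less_imp_less) (use assms in simp)
qed

lemma sqrt_sq_eq: fixes x y :: real assumes "y = (2*x)^2" "0 \<le> x" shows "sqrt y = 2*x"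
proof -
  have "sqrt y = abs (2*x)" unfolding assms(1) by (rule real_sqrt_abs)
  thus ?thesis using assms(2) by simp
qed

lemma tau0_1_f: fixes M :: real assumes M: "M > 0" and t: "M/(1+sqrt(1+4*M^2)) < t"
  shows "4*M*t^2+2*t-M > 0" and "0 < t"
proof -
  define r where "r = sqrt(1+4*M^2)"
  have r2: "r^2 = 1+4*M^2" unfolding r_def by simp
  have r0: "r \<ge> 0" unfolding r_def by simp
  define z where "z = M/(1+r)"
  have z0: "z > 0" unfolding z_def using M r0 by simp
  have e: "z = (r-1)/(4*M)"
  proof -
    have "(r-1)*(1+r) = 4*M^2" using r2 by (simp add: algebra_simps power2_eq_square)
    thus ?thesis unfolding z_def using M r0 by (simp add: field_simps power2_eq_square)
  qed
  have "4*M*z^2+2*z-M = (r^2-1-4*M^2)/(4*M)" unfolding e using M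
    by (simp add: field_simps power2_eq_square)
  hence fz: "4*M*z^2+2*z-M = 0" using r2 by simp
  have zt: "z < t" using t unfolding z_def r_def .
  have "4*M*t^2+2*t-M - (4*M*z^2+2*z-M) = (t-z)*(4*M*(t+z)+2)" by (simp add: algebra_simps power2_eq_square)
  moreover have "(t-z)*(4*M*(t+z)+2) > 0" using zt z0 M by (intro mult_pos_pos add_pos_pos) auto
  ultimately show "4*M*t^2+2*t-M > 0" using fz by linarith
  show "0 < t" using zt z0 by simp
qed

lemma tau0_2_f: fixes M :: real assumes M: "M > 0" and t: "1/(M+sqrt(M^2+4)) < t"
  shows "2*M*t+4*t^2-1 > 0" and "0 < t"
proof -
  define r where "r = sqrt(M^2+4)"
  have r2: "r^2 = M^2+4" unfolding r_def by simp
  have r0: "r \<ge> 0" unfolding r_def by simp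
  define z where "z = 1/(M+r)"
  have z0: "z > 0" unfolding z_def using M r0 by simp
  have e: "z = (r-M)/4"
  proof -
    have "(r-M)*(M+r) = 4" using r2 by (simp add: algebra_simps power2_eq_square)
    thus ?thesis unfolding z_def using M r0 by (simp add: field_simps)
  qed
  have "2*M*z+4*z^2-1 = (r^2-M^2-4)/4" unfolding e
    by (simp add: field_simps power2_eq_square)
  hence fz: "2*M*z+4*z^2-1 = 0" using r2 by simp
  have zt: "z < t" using t unfolding z_def r_def .
  have "2*M*t+4*t^2-1 - (2*M*z+4*z^2-1) = (t-z)*(2*M+4*(t+z))" by (simp add: algebra_simps power2_eq_square)
  moreover have "(t-z)*(2*M+4*(t+z)) > 0" using zt z0 M by (intro mult_pos_pos) auto
  ultimately show "2*M*t+4*t^2-1 > 0" using fz by linarith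
  show "0 < t" using zt z0 by simp
qed



lemma div_lt1: fixes k X Y :: real assumes "0 < k" "X < Y*k/2" shows "2/k*X < Y"
  using assms by (simp add: field_simps)
lemma div_lt2: fixes k X Y :: real assumes "0 < k" "Y*k/2 < X" shows "Y < 2/k*X"
  using assms by (simp add: field_simps)

lemma core1:
  fixes M t :: real
  defines "D \<equiv> M^2 + 2*t*M + 1"
  defines "k \<equiv> 1 - t^2"
  defines "ss \<equiv> 8*t*(1+2*t*M)"
  defines "bs \<equiv> 4+8*t*M"
  assumes M: "M \<ge> 2" and t0: "0 < t" and f: "4*M*t^2+2*t-M > 0"
    and g: "2*(1-2*t^2)*(1+2*t*M) - 1 > 0"
  shows "ss = 2*M + t*bs + sqrt ((2*M+t*bs)^2 - bs*(bs-4))"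
    "bs = 2 + t*ss + sqrt ((2+t*ss)^2 - ss*(ss-4*M))"
    "4*M < 2/k*(M+t+t*sqrt D)"
    "2/k*(M+t+t*sqrt D) < ss"
    "ss < 2/k*(M+t+sqrt D)"
    "2/k*(1+t*M+t*sqrt D) < bs"
    "bs < 2/k*(1+t*M+sqrt D)"
proof -
  define ff where "ff = 4*M*t^2+2*t-M"
  define gg where "gg = 2*(1-2*t^2)*(1+2*t*M) - 1"
  have ff: "ff > 0" using f ff_def by simp
  have gg: "gg > 0" using g gg_def by simp
  have h2: "1 - 2*t^2 > 0"
  proof (rule ccontr)
    assume "\<not> 1 - 2*t^2 > 0"
    hence "(1-2*t^2)*(1+2*t*M) \<le> 0" using M t0 by (intro mult_nonpos_nonneg) auto
    thus False using g by simp
  qed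
  have kpos: "k > 0" unfolding k_def using h2 zero_le_power2[of t] by linarith
  have Dpos: "D > 0" unfolding D_def using M t0 zero_le_power2[of M] mult_pos_pos[of t M] by linarith
  define s where "s = sqrt D"
  have s2: "s^2 = D" unfolding s_def using Dpos by simp
  have s0: "s > 0" unfolding s_def using Dpos by simp
  have tlow: "t^2 \<ge> 3/20"
  proof (rule ccontr)
    assume "\<not> t^2 \<ge> 3/20"
    hence a: "t^2 < 3/20" by simp
    have "t < 2/5"
    proof (rule ccontr)
      assume "\<not> t < 2/5" hence "(2/5)^2 \<le> t^2" by (intro power_mono) auto
      thus False using a by (simp add: power2_eq_square)
    qed
    have "1-4*t^2 \<ge> 2/5" using a by simp
    hence "M*(1-4*t^2) \<ge> 2*(2/5)" using M by (intro mult_mono) auto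
    thus False using f \<open>t < 2/5\<close> by (simp add: algebra_simps)
  qed
  show "ss = 2*M + t*bs + sqrt ((2*M+t*bs)^2 - bs*(bs-4))"
  proof -
    have "(2*M+t*bs)^2 - bs*(bs-4) = (2*ff)^2" unfolding ff_def bs_def
      by (simp add: algebra_simps power2_eq_square)
    hence "sqrt ((2*M+t*bs)^2 - bs*(bs-4)) = 2*ff" using ff by (intro sqrt_sq_eq) auto
    thus ?thesis unfolding ff_def ss_def bs_def by (simp add: algebra_simps power2_eq_square)
  qed
  show "bs = 2 + t*ss + sqrt ((2+t*ss)^2 - ss*(ss-4*M))"
  proof -
    have "(2+t*ss)^2 - ss*(ss-4*M) = (2*gg)^2" unfolding gg_def ss_def
      by (simp add: algebra_simps power2_eq_square)
    hence "sqrt ((2+t*ss)^2 - ss*(ss-4*M)) = 2*gg" using gg by (intro sqrt_sq_eq) auto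
    thus ?thesis unfolding gg_def ss_def bs_def by (simp add: algebra_simps power2_eq_square)
  qed
  show "4*M < 2/k*(M+t+t*sqrt D)"
  proof (rule div_lt2[OF kpos])
    have e: "t^2*D - (2*M*k - M - t)^2 = M*ff*k" unfolding D_def k_def ff_def
      by (simp add: algebra_simps power2_eq_square)
    have "M*ff*k > 0" using M ff kpos by simp
    hence "2*M*k - M - t < t*sqrt D" using e t0 Dpos by (intro lt_bs) auto
    thus "4*M*k/2 < M+t+t*sqrt D" by simp
  qed
  show "2/k*(M+t+t*sqrt D) < ss"
  proof (rule div_lt1[OF kpos])
    define P where "P = 4*t*(1+2*t*M)*k"
    have Pss: "ss*k/2 = P" unfolding P_def ss_def by simp
    have A: "8*t^2-8*t^2*t^2-1 \<ge> 0"
    proof -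
      have "(t^2-3/20)*(17/20-t^2) \<ge> 0" using tlow h2 by (intro mult_nonneg_nonneg) auto
      thus ?thesis by (simp add: algebra_simps power2_eq_square)
    qed
    have "P - M - t = M*(8*t^2-8*t^2*t^2-1) + t*(3-4*t^2)" unfolding P_def k_def
      by (simp add: algebra_simps power2_eq_square)
    moreover have "M*(8*t^2-8*t^2*t^2-1) \<ge> 0" using A M by simp
    moreover have "t*(3-4*t^2) > 0" using t0 h2 by simp
    ultimately have Ppos: "P - M - t > 0" by linarith
    have Q: "4*t*(1-2*t^2) - M*(16*t^2*t^2-12*t^2+1) > 0"
    proof -
      have "M*(1-4*t^2) < 2*t" using f by (simp add: algebra_simps)
      hence "2*(1-2*t^2)*(M*(1-4*t^2)) < 2*(1-2*t^2)*(2*t)" using h2 by simp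
      moreover have "M*(16*t^2*t^2-12*t^2+1) = 2*(1-2*t^2)*(M*(1-4*t^2)) - M"
        by (simp add: algebra_simps power2_eq_square)
      ultimately show ?thesis using M by (simp add: algebra_simps)
    qed
    have e: "(P-M-t)^2 - t^2*D = ff*k*(4*t*(1-2*t^2) - M*(16*t^2*t^2-12*t^2+1))"
      unfolding P_def D_def k_def ff_def by (simp add: algebra_simps power2_eq_square)
    have "ff*k*(4*t*(1-2*t^2) - M*(16*t^2*t^2-12*t^2+1)) > 0" using ff kpos Q by simp
    hence "t*sqrt D < P-M-t" using e Ppos t0 Dpos by (intro lt_bs2) auto
    thus "M+t+t*sqrt D < ss*k/2" using Pss by simp
  qed
  show "ss < 2/k*(M+t+sqrt D)"
  proof (rule div_lt2[OF kpos])
    have e: "D - (ss*k/2 - (M+t))^2 = k*gg^2" unfolding D_def k_def gg_def ss_def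
      by (simp add: field_simps power2_eq_square)
    have "k*gg^2 > 0" using kpos gg by simp
    hence "ss*k/2 - (M+t) < sqrt D" using e by (intro real_less_rsqrt) simp
    thus "ss*k/2 < M+t+sqrt D" by simp
  qed
  show "2/k*(1+t*M+t*sqrt D) < bs"
  proof (rule div_lt1[OF kpos])
    define R where "R = (2+4*t*M)*k"
    have Rbs: "bs*k/2 = R" unfolding R_def bs_def by (simp add: algebra_simps)
    have "R-1-t*M = (1-2*t^2) + M*t*(3-4*t^2)" unfolding R_def k_def
      by (simp add: algebra_simps power2_eq_square)
    moreover have "M*t*(3-4*t^2) > 0" using M t0 h2 by simp
    ultimately have Rpos: "R-1-t*M > 0" using h2 by linarith
    have e: "(R-1-t*M)^2 - t^2*D = gg*k*(1+2*M*t)" unfolding R_def D_def k_def gg_def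
      by (simp add: algebra_simps power2_eq_square)
    have "1+2*M*t > 0" using M t0 by (simp add: add_pos_pos)
    hence "gg*k*(1+2*M*t) > 0" using gg kpos by simp
    hence "t*sqrt D < R-1-t*M" using e Rpos t0 Dpos by (intro lt_bs2) auto
    thus "1+t*M+t*sqrt D < bs*k/2" using Rbs by simp
  qed
  show "bs < 2/k*(1+t*M+sqrt D)"
  proof (rule div_lt2[OF kpos])
    have e: "D - (bs*k/2 - (1+t*M))^2 = k*ff^2" unfolding D_def k_def ff_def bs_def
      by (simp add: field_simps power2_eq_square)
    have "k*ff^2 > 0" using kpos ff by simp
    hence "bs*k/2 - (1+t*M) < sqrt D" using e by (intro real_less_rsqrt) simp
    thus "bs*k/2 < 1+t*M+sqrt D" by simp
  qed
qed



lemma core2: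
  fixes M t :: real
  defines "D \<equiv> M^2 + 2*t*M + 1"
  defines "k \<equiv> 1 - t^2"
  defines "ss \<equiv> 8*t*(M+2*t)"
  defines "bs \<equiv> 4*M+8*t"
  assumes M: "M \<ge> 2" and t0: "0 < t" and f: "2*M*t+4*t^2-1 > 0"
    and g: "2*(1-2*t^2)*(M+2*t) - M > 0"
  shows "ss = 2 + t*bs + sqrt ((2+t*bs)^2 - bs*(bs-4*M))"
    "bs = 2*M + t*ss + sqrt ((2*M+t*ss)^2 - ss*(ss-4))"
    "4 < 2/k*(1+t*M+t*sqrt D)"
    "2/k*(1+t*M+t*sqrt D) < ss"
    "ss < 2/k*(1+t*M+sqrt D)"
    "2/k*(M+t+t*sqrt D) < bs"
    "bs < 2/k*(M+t+sqrt D)"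
proof -
  define ff where "ff = 2*M*t+4*t^2-1"
  define gg where "gg = 2*(1-2*t^2)*(M+2*t) - M"
  have ff: "ff > 0" using f ff_def by simp
  have gg: "gg > 0" using g gg_def by simp
  have h2: "1 - 2*t^2 > 0"
  proof (rule ccontr)
    assume "\<not> 1 - 2*t^2 > 0"
    hence "(1-2*t^2)*(M+2*t) \<le> 0" using M t0 by (intro mult_nonpos_nonneg) auto
    thus False using g M by simp
  qed
  have kpos: "k > 0" unfolding k_def using h2 zero_le_power2[of t] by linarith
  have Dpos: "D > 0" unfolding D_def using M t0 zero_le_power2[of M] mult_pos_pos[of t M] by linarith
  show "ss = 2 + t*bs + sqrt ((2+t*bs)^2 - bs*(bs-4*M))"
  proof -
    have "(2+t*bs)^2 - bs*(bs-4*M) = (2*ff)^2" unfolding ff_def bs_def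
      by (simp add: algebra_simps power2_eq_square)
    hence "sqrt ((2+t*bs)^2 - bs*(bs-4*M)) = 2*ff" using ff by (intro sqrt_sq_eq) auto
    thus ?thesis unfolding ff_def ss_def bs_def by (simp add: algebra_simps power2_eq_square)
  qed
  show "bs = 2*M + t*ss + sqrt ((2*M+t*ss)^2 - ss*(ss-4))"
  proof -
    have "(2*M+t*ss)^2 - ss*(ss-4) = (2*gg)^2" unfolding gg_def ss_def
      by (simp add: algebra_simps power2_eq_square)
    hence "sqrt ((2*M+t*ss)^2 - ss*(ss-4)) = 2*gg" using gg by (intro sqrt_sq_eq) auto
    thus ?thesis unfolding gg_def ss_def bs_def by (simp add: algebra_simps power2_eq_square)
  qed
  show "4 < 2/k*(1+t*M+t*sqrt D)"
  proof (rule div_lt2[OF kpos])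
    have e: "t^2*D - (2*k - 1 - t*M)^2 = ff*k" unfolding D_def k_def ff_def
      by (simp add: algebra_simps power2_eq_square)
    have "ff*k > 0" using ff kpos by simp
    hence "2*k - 1 - t*M < t*sqrt D" using e t0 Dpos by (intro lt_bs) auto
    thus "4*k/2 < 1+t*M+t*sqrt D" by simp
  qed
  show "2/k*(1+t*M+t*sqrt D) < ss"
  proof (rule div_lt1[OF kpos])
    define P where "P = 4*t*(M+2*t)*k"
    have Pss: "ss*k/2 = P" unfolding P_def ss_def by simp
    have "2*(P - 1 - t*M) = 2*M*t*(3-4*t^2) + 2*(8*t^2-8*t^2*t^2-1)" unfolding P_def k_def
      by (simp add: algebra_simps power2_eq_square)
    moreover have "2*M*t*(3-4*t^2) > (1-4*t^2)*(3-4*t^2)"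
    proof -
      have "3-4*t^2 > 0" using h2 by simp
      moreover have "2*M*t > 1-4*t^2" using f by simp
      ultimately show ?thesis by simp
    qed
    moreover have "(1-4*t^2)*(3-4*t^2) + 2*(8*t^2-8*t^2*t^2-1) = 1"
      by (simp add: algebra_simps power2_eq_square)
    ultimately have Ppos: "P - 1 - t*M > 0" by (smt (verit))
    have Q: "4*M*t*(1-2*t^2) - (16*t^2*t^2-12*t^2+1) > 0"
    proof -
      have "1-4*t^2 < 2*M*t" using f by simp
      hence "2*(1-2*t^2)*(1-4*t^2) < 2*(1-2*t^2)*(2*M*t)" using h2 by simp
      moreover have "16*t^2*t^2-12*t^2+1 = 2*(1-2*t^2)*(1-4*t^2) - 1"
        by (simp add: algebra_simps power2_eq_square)
      ultimately show ?thesis by (simp add: algebra_simps)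
    qed
    have e: "(P-1-t*M)^2 - t^2*D = ff*k*(4*M*t*(1-2*t^2) - (16*t^2*t^2-12*t^2+1))"
      unfolding P_def D_def k_def ff_def by (simp add: algebra_simps power2_eq_square)
    have "ff*k*(4*M*t*(1-2*t^2) - (16*t^2*t^2-12*t^2+1)) > 0" using ff kpos Q by simp
    hence "t*sqrt D < P-1-t*M" using e Ppos t0 Dpos by (intro lt_bs2) auto
    thus "1+t*M+t*sqrt D < ss*k/2" using Pss by simp
  qed
  show "ss < 2/k*(1+t*M+sqrt D)"
  proof (rule div_lt2[OF kpos])
    have e: "D - (ss*k/2 - (1+t*M))^2 = k*gg^2" unfolding D_def k_def gg_def ss_def
      by (simp add: field_simps power2_eq_square)
    have "k*gg^2 > 0" using kpos gg by simp
    hence "ss*k/2 - (1+t*M) < sqrt D" using e by (intro real_less_rsqrt) simp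
    thus "ss*k/2 < 1+t*M+sqrt D" by simp
  qed
  show "2/k*(M+t+t*sqrt D) < bs"
  proof (rule div_lt1[OF kpos])
    define R where "R = (2*M+4*t)*k"
    have Rbs: "bs*k/2 = R" unfolding R_def bs_def by (simp add: algebra_simps)
    have "R-M-t = M*(1-2*t^2) + t*(3-4*t^2)" unfolding R_def k_def
      by (simp add: algebra_simps power2_eq_square)
    moreover have "M*(1-2*t^2) > 0" using M h2 by simp
    moreover have "t*(3-4*t^2) > 0" using t0 h2 by simp
    ultimately have Rpos: "R-M-t > 0" by linarith
    have e: "(R-M-t)^2 - t^2*D = gg*k*(M+2*t)" unfolding R_def D_def k_def gg_def
      by (simp add: algebra_simps power2_eq_square)
    have "M+2*t > 0" using M t0 by simp
    hence "gg*k*(M+2*t) > 0" using gg kpos by simp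
    hence "t*sqrt D < R-M-t" using e Rpos t0 Dpos by (intro lt_bs2) auto
    thus "M+t+t*sqrt D < bs*k/2" using Rbs by simp
  qed
  show "bs < 2/k*(M+t+sqrt D)"
  proof (rule div_lt2[OF kpos])
    have e: "D - (bs*k/2 - (M+t))^2 = k*ff^2" unfolding D_def k_def ff_def bs_def
      by (simp add: field_simps power2_eq_square)
    have "k*ff^2 > 0" using kpos ff by simp
    hence "bs*k/2 - (M+t) < sqrt D" using e by (intro real_less_rsqrt) simp
    thus "bs*k/2 < M+t+sqrt D" by simp
  qed
qed


theorem mainTheorem16:
  fixes N :: nat
  assumes "N > 0"
  shows
   "(\<forall>\<tau>::real. tau0_1 (real N) < \<tau> \<and> \<tau> < tau1_1 (real N) \<longrightarrow>
      (0 < beta2_star (real N) \<tau> \<and> beta2_star (real N) \<tau> \<le> beta2_up (real N) \<tau> \<and>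
       beta1_sstar (real N) \<tau> = phi2_plus (real N) \<tau> (beta2_star (real N) \<tau>)) \<and>
      (0 < beta1_sstar (real N) \<tau> \<and> beta1_sstar (real N) \<tau> \<le> beta1_up (real N) \<tau> \<and>
       beta2_star (real N) \<tau> = phi1_plus (real N) \<tau> (beta1_sstar (real N) \<tau>)) \<and>
      4*(real N+1) < beta1_low (real N) \<tau> \<and>
      beta1_low (real N) \<tau> < beta1_sstar (real N) \<tau> \<and>
      beta1_sstar (real N) \<tau> < beta1_up (real N) \<tau> \<and>
      beta2_low (real N) \<tau> < beta2_star (real N) \<tau> \<and>
      beta2_star (real N) \<tau> < beta2_up (real N) \<tau>)
  \<and>
   (\<forall>\<tau>::real. tau0_2 (real N) < \<tau> \<and> \<tau> < tau1_2 (real N) \<longrightarrow>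
      (0 < beta1_star (real N) \<tau> \<and> beta1_star (real N) \<tau> \<le> beta1_up (real N) \<tau> \<and>
       beta2_sstar (real N) \<tau> = phi1_plus (real N) \<tau> (beta1_star (real N) \<tau>)) \<and>
      (0 < beta2_sstar (real N) \<tau> \<and> beta2_sstar (real N) \<tau> \<le> beta2_up (real N) \<tau> \<and>
       beta1_star (real N) \<tau> = phi2_plus (real N) \<tau> (beta2_sstar (real N) \<tau>)) \<and>
      4 < beta2_low (real N) \<tau> \<and>
      beta2_low (real N) \<tau> < beta2_sstar (real N) \<tau> \<and>
      beta2_sstar (real N) \<tau> < beta2_up (real N) \<tau> \<and>
      beta1_low (real N) \<tau> < beta1_star (real N) \<tau> \<and>
      beta1_star (real N) \<tau> < beta1_up (real N) \<tau>)"
proof -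
  define m where "m = real N"
  have m1: "m \<ge> 1" using assms unfolding m_def by simp
  have M2: "m + 1 \<ge> 2" using m1 by simp
  have Mp: "m + 1 > 0" using m1 by simp
  {
    fix \<tau> :: real
    assume a: "tau0_1 (real N) < \<tau>" "\<tau> < tau1_1 (real N)"
    have a0: "(m+1)/(1+sqrt(1+4*(m+1)^2)) < \<tau>" using a(1) unfolding tau0_1_def m_def .
    note F = tau0_1_f[OF Mp a0]
    have T1: "tau1_1 m > 0 \<and> gg1 m (tau1_1 m) = 0" using tau1_1_char m1 by simp
    have "gg1 m \<tau> > 0" using gg1_pos_before[of m "tau1_1 m" \<tau>] T1 m1 F(2) a(2) unfolding m_def by simp
    hence G: "2*(1-2*\<tau>^2)*(1+2*\<tau>*(m+1)) - 1 > 0" unfolding gg1_def .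
    note C = core1[OF M2 F(2) F(1) G]
    have bpos: "0 < 4+8*\<tau>*(m+1)" using F(2) Mp by (simp add: add_pos_pos)
    have spos: "0 < 8*\<tau>*(1+2*\<tau>*(m+1))" using F(2) Mp by (simp add: add_pos_pos)
    note defs = beta2_star_def beta2_up_def beta1_sstar_def beta1_up_def beta1_low_def beta2_low_def
      phi1_plus_def phi2_plus_def DD_def
    have X: "(0 < beta2_star m \<tau> \<and> beta2_star m \<tau> \<le> beta2_up m \<tau> \<and>
       beta1_sstar m \<tau> = phi2_plus m \<tau> (beta2_star m \<tau>)) \<and>
      (0 < beta1_sstar m \<tau> \<and> beta1_sstar m \<tau> \<le> beta1_up m \<tau> \<and>
       beta2_star m \<tau> = phi1_plus m \<tau> (beta1_sstar m \<tau>)) \<and>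
      4*(m+1) < beta1_low m \<tau> \<and>
      beta1_low m \<tau> < beta1_sstar m \<tau> \<and>
      beta1_sstar m \<tau> < beta1_up m \<tau> \<and>
      beta2_low m \<tau> < beta2_star m \<tau> \<and>
      beta2_star m \<tau> < beta2_up m \<tau>"
      unfolding defs by (intro conjI bpos spos C less_imp_le[OF C(7)] less_imp_le[OF C(5)])
    note this[unfolded m_def]
  }
  note P1 = this
  {
    fix \<tau> :: real
    assume a: "tau0_2 (real N) < \<tau>" "\<tau> < tau1_2 (real N)"
    have a0: "1/((m+1)+sqrt((m+1)^2+4)) < \<tau>" using a(1) unfolding tau0_2_def m_def .
    note F = tau0_2_f[OF Mp a0]
    have T1: "tau1_2 m > 0 \<and> gg2 m (tau1_2 m) = 0" using tau1_2_char m1 by simp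
    have "gg2 m \<tau> > 0" using gg2_pos_before[of m "tau1_2 m" \<tau>] T1 m1 F(2) a(2) unfolding m_def by simp
    hence G: "2*(1-2*\<tau>^2)*((m+1)+2*\<tau>) - (m+1) > 0" unfolding gg2_def .
    note C = core2[OF M2 F(2) F(1) G]
    have bpos: "0 < 4*(m+1)+8*\<tau>" using F(2) Mp by (simp add: add_pos_pos)
    have spos: "0 < 8*\<tau>*((m+1)+2*\<tau>)" using F(2) Mp by (simp add: add_pos_pos)
    note defs = beta1_star_def beta2_up_def beta2_sstar_def beta1_up_def beta1_low_def beta2_low_def
      phi1_plus_def phi2_plus_def DD_def
    have X: "(0 < beta1_star m \<tau> \<and> beta1_star m \<tau> \<le> beta1_up m \<tau> \<and>
       beta2_sstar m \<tau> = phi1_plus m \<tau> (beta1_star m \<tau>)) \<and>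
      (0 < beta2_sstar m \<tau> \<and> beta2_sstar m \<tau> \<le> beta2_up m \<tau> \<and>
       beta1_star m \<tau> = phi2_plus m \<tau> (beta2_sstar m \<tau>)) \<and>
      4 < beta2_low m \<tau> \<and>
      beta2_low m \<tau> < beta2_sstar m \<tau> \<and>
      beta2_sstar m \<tau> < beta2_up m \<tau> \<and>
      beta1_low m \<tau> < beta1_star m \<tau> \<and>
      beta1_star m \<tau> < beta1_up m \<tau>"
      unfolding defs by (intro conjI bpos spos C less_imp_le[OF C(7)] less_imp_le[OF C(5)])
    note this[unfolded m_def]
  }
  note P2 = this
  show ?thesis using P1 P2 by blast
qed

end
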